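(* Let $c>0$, $n\ge 1$, and let $\mathbb{R}^n_c=\{\mathbf{v}\in\mathbb{R}^n:\|\mathbf{v}\|<c\}$ be equipped with Möbius addition $\oplus$, Möbius scalar multiplication $\otimes$ and Möbius coaddition $\boxplus$ (defined in the context). Let $A,B\in\mathbb{R}^n_c$ be distinct, and for $t\in\mathbb{R}$ let $$L_{AB}(t)=A\oplus\big((\ominus A\oplus B)\otimes t\big).$$ Then for all $t\in\mathbb{R}$, $$2\otimes L_{AB}(t)=A\boxplus L_{AB}(2t).$$
   Context: Möbius addition in the ball $\mathbb{R}^n_c$ is $$\mathbf{u}\oplus\mathbf{v}=\frac{\big(1+\frac{2}{c^2}\mathbf{u}\cdot\mathbf{v}+\frac{1}{c^2}\|\mathbf{v}\|^2\big)\mathbf{u}+\big(1-\frac{1}{c^2}\|\mathbf{u}\|^2\big)\mathbf{v}}{1+\frac{2}{c^2}\mathbf{u}\cdot\mathbf{v}+\frac{1}{c^4}\|\mathbf{u}\|^2\|\mathbf{v}\|^2},$$ with $\ominus\mathbf{v}=-\mathbf{v}$ and $\mathbf{u}\ominus\mathbf{v}=\mathbf{u}\oplus(-\mathbf{v})$. Scalar multiplication: for $r\in\mathbb{R}$ and $\mathbf{v}\neq\mathbf{0}$, $r\otimes\mathbf{v}=\mathbf{v}\otimes r=c\tanh\!\big(r\tanh^{-1}(\|\mathbf{v}\|/c)\big)\frac{\mathbf{v}}{\|\mathbf{v}\|}$, and $r\otimes\mathbf{0}=\mathbf{0}$. The gyration generated by $\mathbf{u},\mathbf{v}$ is the map $\mathrm{gyr}[\mathbf{u},\mathbf{v}]\mathbf{w}=\ominus(\mathbf{u}\oplus\mathbf{v})\oplus\big(\mathbf{u}\oplus(\mathbf{v}\oplus\mathbf{w})\big)$.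 Möbius coaddition is $\mathbf{a}\boxplus\mathbf{b}=\mathbf{a}\oplus\mathrm{gyr}[\mathbf{a},\ominus\mathbf{b}]\mathbf{b}$ for $\mathbf{a},\mathbf{b}\in\mathbb{R}^n_c$. *)

theory Defs
  imports "HOL-Analysis.Analysis"
begin

text \<open>Moebius gyrovector space structure on the ball of radius c in R^n,
  realised on vectors of type real ^ 'n (n = CARD('n)).\<close>

definition mob_add :: "real \<Rightarrow> real ^ 'n \<Rightarrow> real ^ 'n \<Rightarrow> real ^ 'n" where
  "mob_add c u v =
     inverse (1 + (2 / c^2) * (u \<bullet> v) + (1 / c^4) * (norm u)^2 * (norm v)^2) *\<^sub>R
     ((1 + (2 / c^2) * (u \<bullet> v) + (1 / c^2) * (norm v)^2) *\<^sub>R u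
      + (1 - (1 / c^2) * (norm u)^2) *\<^sub>R v)"

definition mob_neg :: "real ^ 'n \<Rightarrow> real ^ 'n" where
  "mob_neg v = - v"

definition mob_sub :: "real \<Rightarrow> real ^ 'n \<Rightarrow> real ^ 'n \<Rightarrow> real ^ 'n" where
  "mob_sub c u v = mob_add c u (mob_neg v)"

definition mob_smult :: "real \<Rightarrow> real \<Rightarrow> real ^ 'n \<Rightarrow> real ^ 'n" where
  "mob_smult c r v =
     (if v = 0 then 0
      else (c * tanh (r * artanh (norm v / c))) *\<^sub>R (inverse (norm v) *\<^sub>R v))"

definition mob_gyr :: "real \<Rightarrow> real ^ 'n \<Rightarrow> real ^ 'n \<Rightarrow> real ^ 'n \<Rightarrow> real ^ 'n" where
  "mob_gyr c u v w = mob_add c (mob_neg (mob_add c u v)) (mob_add c u (mob_add c v w))"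

definition mob_coadd :: "real \<Rightarrow> real ^ 'n \<Rightarrow> real ^ 'n \<Rightarrow> real ^ 'n" where
  "mob_coadd c a b = mob_add c a (mob_gyr c a (mob_neg b) b)"

definition mob_line :: "real \<Rightarrow> real ^ 'n \<Rightarrow> real ^ 'n \<Rightarrow> real \<Rightarrow> real ^ 'n" where
  "mob_line c A B t = mob_add c A (mob_smult c t (mob_add c (mob_neg A) B))"

end

theory Submission
  imports Defs
begin

definition ip :: "real \<Rightarrow> real \<Rightarrow> real \<Rightarrow> real \<Rightarrow> real \<Rightarrow> real \<Rightarrow> real \<Rightarrow> real" where
  "ip p q r x1 y1 x2 y2 = x1*x2*p + (x1*y2+y1*x2)*r + y1*y2*q"

lemma inner_lin:
  fixes a b :: "real ^ 'n"
  shows "inner (x1 *\<^sub>R a + y1 *\<^sub>R b) (x2 *\<^sub>R a + y2 *\<^sub>R b) = ip ((a \<bullet> a)) ((b \<bullet> b)) ((a \<bullet> b)) x1 y1 x2 y2"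
  unfolding ip_def by (simp add: inner_add_left inner_add_right inner_commute algebra_simps)

lemma mob_add_alt:
  fixes u v :: "real ^ 'n"
  assumes "k = 1/c^2"
  shows "mob_add c u v = (1/(1 + 2*k*((u \<bullet> v)) + k^2*((u \<bullet> u))*((v \<bullet> v)))) *\<^sub>R
      ((1 + 2*k*((u \<bullet> v)) + k*((v \<bullet> v))) *\<^sub>R u + (1 - k*((u \<bullet> u))) *\<^sub>R v)"
proof -
  have "1/c^4 = k^2" using assms by (simp add: power_divide flip: power_mult)
  then show ?thesis using assms unfolding mob_add_def
    by (simp add: power2_norm_eq_inner[symmetric] divide_inverse mult.assoc)
qed

lemma mob_add_lin:
  fixes a b :: "real ^ 'n"
  assumes "k = 1/c^2"
  defines "p \<equiv> (a \<bullet> a)" and "q \<equiv> (b \<bullet> b)" and "r \<equiv> (a \<bullet> b)"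
  shows "mob_add c (x1 *\<^sub>R a + y1 *\<^sub>R b) (x2 *\<^sub>R a + y2 *\<^sub>R b) =
    (((1 + 2*k*ip p q r x1 y1 x2 y2 + k*ip p q r x2 y2 x2 y2)*x1 + (1 - k*ip p q r x1 y1 x1 y1)*x2)
      / (1 + 2*k*ip p q r x1 y1 x2 y2 + k^2*ip p q r x1 y1 x1 y1*ip p q r x2 y2 x2 y2)) *\<^sub>R a +
    (((1 + 2*k*ip p q r x1 y1 x2 y2 + k*ip p q r x2 y2 x2 y2)*y1 + (1 - k*ip p q r x1 y1 x1 y1)*y2)
      / (1 + 2*k*ip p q r x1 y1 x2 y2 + k^2*ip p q r x1 y1 x1 y1*ip p q r x2 y2 x2 y2)) *\<^sub>R b"
  unfolding mob_add_alt[OF assms(1)] inner_lin p_def q_def r_def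
  by (simp add: scaleR_add_right scaleR_add_left algebra_simps divide_inverse)

lemma coeff_eq: "x = x' \<Longrightarrow> y = y' \<Longrightarrow> x *\<^sub>R a + y *\<^sub>R b = x' *\<^sub>R a + y' *\<^sub>R b" by simp


lemma D_pos:
  fixes k p q r :: real
  assumes "k > 0" "p \<ge> 0" "q \<ge> 0" "k*p < 1" "k*q < 1" "r^2 \<le> p*q"
  shows "1 + 2*k*r + k^2*p*q > 0"
proof -
  have "(k*p)*(k*q) \<le> (k*p)*1" using assms by (intro mult_left_mono) auto
  hence "(k*p)*(k*q) < 1" using assms by linarith
  hence pq: "k^2*p*q < 1" by (simp add: power2_eq_square algebra_simps)
  have "(k*r)^2 \<le> k^2*p*q" using assms by (simp add: power_mult_distrib mult.assoc mult_left_mono)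
  hence "(k*r)^2 < 1" using pq by linarith
  hence "\<bar>k*r\<bar> < 1" by (simp add: abs_square_less_1)
  hence "1 + k*r > 0" by linarith
  hence "(1 + k*r)^2 > 0" by simp
  moreover have "1 + 2*k*r + k^2*p*q \<ge> (1 + k*r)^2"
    using \<open>(k*r)^2 \<le> k^2*p*q\<close> by (simp add: power2_eq_square algebra_simps)
  ultimately show ?thesis by linarith
qed

lemma mob_add_neg_self: "mob_add c (- v) v = 0"
proof -
  have "(1 + (2 / c^2) * ((-v) \<bullet> v) + (1 / c^2) * (norm v)^2) *\<^sub>R (-v)
      + (1 - (1 / c^2) * (norm (-v))^2) *\<^sub>R v = 0"
    by (simp add: power2_norm_eq_inner algebra_simps)
  thus ?thesis unfolding mob_add_def by simp
qed

lemma mob_add_zero: "mob_add c u 0 = u"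
  unfolding mob_add_def by simp


lemma ball_k:
  fixes x :: "real ^ 'n"
  assumes c: "c > 0" and k: "k = 1/c^2" and n: "norm x < c"
  shows "k * (x \<bullet> x) < 1"
proof -
  have "x \<bullet> x < c^2" using n c
    by (metis norm_ge_zero power2_norm_eq_inner power_strict_mono zero_less_numeral)
  hence "k * (x \<bullet> x) < k * c^2" using k c by (intro mult_strict_left_mono) auto
  thus ?thesis using k c by simp
qed

lemma coadd_closed:
  fixes a b :: "real ^ 'n"
  assumes c: "c > 0" and k: "k = 1/c^2"
    and na: "norm a < c" and nb: "norm b < c"
  defines "p \<equiv> a \<bullet> a" and "q \<equiv> b \<bullet> b" and "r \<equiv> a \<bullet> b"
  shows "mob_coadd c a b = ((1-k*q)/(1-k^2*p*q)) *\<^sub>R a + ((1-k*p)/(1-k^2*p*q)) *\<^sub>R b"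
proof -
  have kpos: "k > 0" using k c by simp
  have p0: "p \<ge> 0" and q0: "q \<ge> 0" unfolding p_def q_def by simp_all
  have kp: "k*p < 1" unfolding p_def using ball_k[OF c k na] .
  have kq: "k*q < 1" unfolding q_def using ball_k[OF c k nb] .
  have rpq: "r^2 \<le> p*q" unfolding p_def q_def r_def by (rule Cauchy_Schwarz_ineq)
  have "(-r)^2 \<le> p*q" using rpq by simp
  from D_pos[OF kpos p0 q0 kp kq this]
  have D1: "1 - 2*k*r + k^2*p*q > 0" by simp
  have al: "1 - k*p > 0" using kp by simp
  have E: "1 - k^2*p*q > 0"
  proof -
    have "(k*p)*(k*q) \<le> (k*p)*1" using kp kq kpos p0 by (intro mult_left_mono) auto
    thus ?thesis using kp by (simp add: power2_eq_square algebra_simps)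
  qed
  have zero: "mob_add c (-b) b = 0" by (rule mob_add_neg_self)
  have co: "mob_coadd c a b = mob_add c a (mob_add c (- mob_add c a (-b)) a)"
    unfolding mob_coadd_def mob_gyr_def mob_neg_def zero mob_add_zero ..
  define d1 where "d1 = 1 - 2*k*r + k^2*p*q"
  have d1: "d1 > 0" using D1 unfolding d1_def .
  define x1 where "x1 = (1-2*k*r+k*q)/d1"
  define y1 where "y1 = -(1-k*p)/d1"
  have u1: "mob_add c a (-b) = x1 *\<^sub>R a + y1 *\<^sub>R b"
  proof -
    have "mob_add c a (-b) = mob_add c (1 *\<^sub>R a + 0 *\<^sub>R b) (0 *\<^sub>R a + (-1) *\<^sub>R b)" by simp
    also have "\<dots> = x1 *\<^sub>R a + y1 *\<^sub>R b"
      unfolding mob_add_lin[OF k] p_def[symmetric] q_def[symmetric] r_def[symmetric]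
      by (rule coeff_eq) (simp_all add: ip_def x1_def y1_def d1_def algebra_simps power2_eq_square)
    finally show ?thesis .
  qed
  define x2 where "x2 = -2*k*q*(1-k*r)/d1"
  define y2 where "y2 = (1-k^2*p*q)/d1"
  have D2: "1 + 2*k*ip p q r (-x1) (-y1) 1 0 + k^2*ip p q r (-x1) (-y1) (-x1) (-y1)*ip p q r 1 0 1 0
      = (1-k*p)^2/d1"
    using d1 unfolding ip_def x1_def y1_def
    by (simp add: field_simps) (insert d1_def, algebra)
  have u2: "mob_add c (- mob_add c a (-b)) a = x2 *\<^sub>R a + y2 *\<^sub>R b"
  proof -
    have "mob_add c (- mob_add c a (-b)) a = mob_add c ((-x1) *\<^sub>R a + (-y1) *\<^sub>R b) (1 *\<^sub>R a + 0 *\<^sub>R b)"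
      unfolding u1 by (simp add: algebra_simps)
    also have "\<dots> = x2 *\<^sub>R a + y2 *\<^sub>R b"
      unfolding mob_add_lin[OF k] p_def[symmetric] q_def[symmetric] r_def[symmetric] D2
      apply (rule coeff_eq)
      using d1 al unfolding ip_def x1_def y1_def x2_def y2_def
       apply (simp_all add: field_simps)
       apply (insert d1_def, algebra)+
      done
    finally show ?thesis .
  qed
  have D3: "1 + 2*k*ip p q r 1 0 x2 y2 + k^2*ip p q r 1 0 1 0*ip p q r x2 y2 x2 y2
      = (1-k^2*p*q)^2/d1"
    using d1 unfolding ip_def x2_def y2_def
    by (simp add: field_simps) (insert d1_def, algebra)
  have "mob_add c a (x2 *\<^sub>R a + y2 *\<^sub>R b) = mob_add c (1 *\<^sub>R a + 0 *\<^sub>R b) (x2 *\<^sub>R a + y2 *\<^sub>R b)"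
    by simp
  also have "\<dots> = ((1-k*q)/(1-k^2*p*q)) *\<^sub>R a + ((1-k*p)/(1-k^2*p*q)) *\<^sub>R b"
      unfolding mob_add_lin[OF k] p_def[symmetric] q_def[symmetric] r_def[symmetric] D3
      apply (rule coeff_eq)
      using d1 E unfolding ip_def x2_def y2_def
       apply (simp_all add: field_simps)
       apply (insert d1_def, algebra)
       apply (thin_tac "0 < d1", thin_tac "_ < 1", thin_tac "d1 = _")
       apply algebra
      done
  finally show ?thesis unfolding co u2 .
qed



lemma k_ball:
  fixes x :: "real ^ 'n"
  assumes c: "c > 0" and k: "k = 1/c^2" and n: "k * (x \<bullet> x) < 1"
  shows "norm x < c"
proof -
  have "(x \<bullet> x) / c^2 < 1" using n k by simp
  hence "x \<bullet> x < c^2" using c by (simp add: divide_less_eq)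
  hence "(norm x)^2 < c^2" by (simp add: power2_norm_eq_inner)
  from power2_less_imp_less[OF this] c show ?thesis by simp
qed


lemma tanh_artanh_real:
  fixes z :: real
  assumes "-1 < z" "z < 1"
  shows "tanh (artanh z) = z"
proof -
  have pos: "(1+z)/(1-z) > 0" using assms by simp
  have "exp (- 2 * artanh z) = inverse ((1+z)/(1-z))"
    unfolding artanh_def using pos by (simp add: exp_minus exp_ln)
  hence E: "exp (- 2 * artanh z) = (1-z)/(1+z)" by simp
  show ?thesis unfolding tanh_real_altdef E using assms by (simp add: field_simps)
qed


lemma tanh_double_real: "tanh (2 * (y::real)) = 2 * tanh y / (1 + (tanh y)^2)"
proof -
  have "tanh (y + y) = (tanh y + tanh y) / (1 + tanh y * tanh y)" by (rule tanh_add) simp_all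
  moreover have "y + y = 2*y" by simp
  ultimately show ?thesis by (simp add: power2_eq_square)
qed


lemma add_norm:
  fixes u v :: "real ^ 'n"
  assumes c: "c > 0" and k: "k = 1/c^2" and nu: "norm u < c" and nv: "norm v < c"
  shows "1 - k * (mob_add c u v \<bullet> mob_add c u v) =
     (1 - k*(u\<bullet>u))*(1 - k*(v\<bullet>v)) / (1 + 2*k*(u\<bullet>v) + k^2*(u\<bullet>u)*(v\<bullet>v))"
    and "norm (mob_add c u v) < c"
proof -
  define p where "p = u\<bullet>u"
  define q where "q = v\<bullet>v"
  define r where "r = u\<bullet>v"
  have kpos: "k > 0" using k c by simp
  have p0: "p \<ge> 0" and q0: "q \<ge> 0" unfolding p_def q_def by simp_all
  have kp: "k*p < 1" unfolding p_def using ball_k[OF c k nu] .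
  have kq: "k*q < 1" unfolding q_def using ball_k[OF c k nv] .
  have rpq: "r^2 \<le> p*q" unfolding p_def q_def r_def by (rule Cauchy_Schwarz_ineq)
  define d where "d = 1 + 2*k*r + k^2*p*q"
  have d: "d > 0" unfolding d_def by (rule D_pos[OF kpos p0 q0 kp kq rpq])
  have e: "mob_add c u v = ((1 + 2*k*r + k*q)/d) *\<^sub>R u + ((1 - k*p)/d) *\<^sub>R v"
  proof -
    have "mob_add c u v = mob_add c (1 *\<^sub>R u + 0 *\<^sub>R v) (0 *\<^sub>R u + 1 *\<^sub>R v)" by simp
    also have "\<dots> = ((1 + 2*k*r + k*q)/d) *\<^sub>R u + ((1 - k*p)/d) *\<^sub>R v"
      unfolding mob_add_lin[OF k] p_def[symmetric] q_def[symmetric] r_def[symmetric]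
      by (rule coeff_eq) (simp_all add: ip_def d_def)
    finally show ?thesis .
  qed
  have eq: "1 - k * (mob_add c u v \<bullet> mob_add c u v) = (1 - k*p)*(1 - k*q) / d"
    unfolding e inner_lin p_def[symmetric] q_def[symmetric] r_def[symmetric] ip_def
    using d by (simp add: field_simps) (insert d_def, algebra)
  thus "1 - k * (mob_add c u v \<bullet> mob_add c u v) =
     (1 - k*(u\<bullet>u))*(1 - k*(v\<bullet>v)) / (1 + 2*k*(u\<bullet>v) + k^2*(u\<bullet>u)*(v\<bullet>v))"
    unfolding p_def q_def r_def d_def .
  have "(1 - k*p)*(1 - k*q) / d > 0" using kp kq d by simp
  hence "k * (mob_add c u v \<bullet> mob_add c u v) < 1" using eq by linarith
  thus "norm (mob_add c u v) < c" by (rule k_ball[OF c k])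
qed


lemma smult2:
  fixes x :: "real ^ 'n"
  assumes c: "c > 0" and k: "k = 1/c^2" and n: "norm x < c"
  shows "mob_smult c 2 x = (2/(1 + k*(x\<bullet>x))) *\<^sub>R x"
proof (cases "x = 0")
  case True thus ?thesis unfolding mob_smult_def by simp
next
  case False
  have z0: "norm x / c \<ge> 0" using c by simp
  have z1: "norm x / c < 1" using n c by simp
  have z: "-1 < norm x / c" "norm x / c < 1" using z0 z1 by linarith+
  have nx: "norm x > 0" using False by simp
  have "mob_smult c 2 x = (c * (2 * (norm x / c) / (1 + (norm x / c)^2)) / norm x) *\<^sub>R x"
  proof -
    have "tanh (2 * artanh (norm x / c)) = 2 * (norm x / c) / (1 + (norm x / c)^2)"
      unfolding tanh_double_real tanh_artanh_real[OF z] ..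
    thus ?thesis unfolding mob_smult_def using False by (simp add: divide_inverse)
  qed
  also have "c * (2 * (norm x / c) / (1 + (norm x / c)^2)) / norm x = 2/(1 + k*(x\<bullet>x))"
  proof -
    have pos: "c * (c * norm x) + norm x * (norm x * norm x) > 0" using c nx by (simp add: add_pos_pos)
    show ?thesis using c nx pos unfolding k by (simp add: field_simps power2_norm_eq_inner[symmetric] power2_eq_square)
  qed
  finally show ?thesis .
qed


lemma smult_double:
  fixes v :: "real ^ 'n"
  assumes c: "c > 0" and k: "k = 1/c^2" and n: "norm v < c"
  shows "mob_smult c (2*t) v = (2/(1 + k*(mob_smult c t v \<bullet> mob_smult c t v))) *\<^sub>R mob_smult c t v"
    and "norm (mob_smult c t v) < c"
proof -
  show "norm (mob_smult c t v) < c"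
  proof (cases "v = 0")
    case True thus ?thesis unfolding mob_smult_def using c by simp
  next
    case False
    have "norm (mob_smult c t v) = c * \<bar>tanh (t * artanh (norm v / c))\<bar>"
      unfolding mob_smult_def using False c by (simp add: abs_mult)
    also have "\<dots> < c * 1" using c tanh_real_bounds[of "t * artanh (norm v / c)"]
      by (intro mult_strict_left_mono) auto
    finally show ?thesis by simp
  qed
  show "mob_smult c (2*t) v = (2/(1 + k*(mob_smult c t v \<bullet> mob_smult c t v))) *\<^sub>R mob_smult c t v"
  proof (cases "v = 0")
    case True thus ?thesis unfolding mob_smult_def by simp
  next
    case False
    define y where "y = t * artanh (norm v / c)"
    have nv: "norm v > 0" using False by simp
    have w: "mob_smult c t v = (c * tanh y / norm v) *\<^sub>R v"
      unfolding mob_smult_def y_def using False by (simp add: divide_inverse)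
    have ww: "k * (mob_smult c t v \<bullet> mob_smult c t v) = (tanh y)^2"
      unfolding w using c k nv by (simp add: power2_norm_eq_inner[symmetric] field_simps power2_eq_square)
    have "mob_smult c (2*t) v = (c * tanh (2*y) / norm v) *\<^sub>R v"
      unfolding mob_smult_def y_def using False by (simp add: divide_inverse mult.assoc)
    also have "\<dots> = (2/(1 + (tanh y)^2)) *\<^sub>R ((c * tanh y / norm v) *\<^sub>R v)"
      unfolding tanh_double_real by (simp add: field_simps)
    finally show ?thesis by (simp only: w ww[unfolded w])
  qed
qed




lemma main_id:
  fixes A w :: "real ^ 'n"
  assumes c: "c > 0" and k: "k = 1/c^2" and nA: "norm A < c" and nw: "norm w < c"
  shows "mob_smult c 2 (mob_add c A w) = mob_coadd c A (mob_add c A ((2/(1+k*(w\<bullet>w))) *\<^sub>R w))"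
proof -
  define p where "p = A\<bullet>A"
  define q where "q = w\<bullet>w"
  define r where "r = A\<bullet>w"
  have kpos: "k > 0" using k c by simp
  have p0: "p \<ge> 0" and q0: "q \<ge> 0" unfolding p_def q_def by simp_all
  have kp: "k*p < 1" unfolding p_def using ball_k[OF c k nA] .
  have kq: "k*q < 1" unfolding q_def using ball_k[OF c k nw] .
  have rpq: "r^2 \<le> p*q" unfolding p_def q_def r_def by (rule Cauchy_Schwarz_ineq)
  define dq where "dq = 1 + 2*k*r + k^2*p*q"
  have dq: "dq > 0" unfolding dq_def by (rule D_pos[OF kpos p0 q0 kp kq rpq])
  have al: "1 - k*p > 0" using kp by simp
  have bq: "1 + k*q > 0" using kpos q0 by (simp add: add_pos_nonneg)
  define xQ where "xQ = (1 + 2*k*r + k*q)/dq"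
  define yQ where "yQ = (1 - k*p)/dq"
  have Q: "mob_add c A w = xQ *\<^sub>R A + yQ *\<^sub>R w"
  proof -
    have "mob_add c A w = mob_add c (1 *\<^sub>R A + 0 *\<^sub>R w) (0 *\<^sub>R A + 1 *\<^sub>R w)" by simp
    also have "\<dots> = xQ *\<^sub>R A + yQ *\<^sub>R w"
      unfolding mob_add_lin[OF k] p_def[symmetric] q_def[symmetric] r_def[symmetric]
      by (rule coeff_eq) (simp_all add: ip_def dq_def xQ_def yQ_def)
    finally show ?thesis .
  qed
  define K where "K = 1 + k*p + k*q + 4*k*r + k^2*p*q"
  have QQ: "1 + k * (mob_add c A w \<bullet> mob_add c A w) = K/dq"
    unfolding Q inner_lin p_def[symmetric] q_def[symmetric] r_def[symmetric] ip_def xQ_def yQ_def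
    using dq by (simp add: field_simps) (insert dq_def K_def, algebra)
  have "0 \<le> k * (mob_add c A w \<bullet> mob_add c A w)" using kpos by simp
  hence "K/dq \<ge> 1" using QQ by linarith
  hence Kpos: "K > 0" using dq by (simp add: le_divide_eq)
  have nQ: "norm (mob_add c A w) < c" by (rule add_norm(2)[OF c k nA nw])
  have LHS: "mob_smult c 2 (mob_add c A w) = (2*xQ*dq/K) *\<^sub>R A + (2*yQ*dq/K) *\<^sub>R w"
    unfolding smult2[OF c k nQ] QQ using dq Kpos unfolding Q
    by (simp add: scaleR_add_right mult_ac)
  define b1 where "b1 = 1 + k*q"
  have b1: "b1 > 0" using bq unfolding b1_def .
  define kk where "kk = 2/b1"
  have w': "(2/(1+k*(w\<bullet>w))) *\<^sub>R w = kk *\<^sub>R w" unfolding kk_def b1_def q_def ..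
  have nw': "norm (kk *\<^sub>R w) < c"
    using smult2[OF c k nw] smult_double(2)[OF c k nw, of 2] unfolding w' by simp
  have d'pos: "1 + 2*k*(A \<bullet> (kk *\<^sub>R w)) + k^2*(A\<bullet>A)*((kk *\<^sub>R w)\<bullet>(kk *\<^sub>R w)) > 0"
    by (rule D_pos[OF kpos inner_ge_zero inner_ge_zero ball_k[OF c k nA] ball_k[OF c k nw'] Cauchy_Schwarz_ineq])
  define dp where "dp = 4*p*q*k^2 + q^2*k^2 + 4*q*r*k^2 + 2*q*k + 4*r*k + 1"
  have dpe: "dp = b1^2 * (1 + 2*k*(A \<bullet> (kk *\<^sub>R w)) + k^2*(A\<bullet>A)*((kk *\<^sub>R w)\<bullet>(kk *\<^sub>R w)))"
    unfolding dp_def kk_def inner_scaleR_left inner_scaleR_right p_def[symmetric] q_def[symmetric] r_def[symmetric]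
    using b1 by (simp add: field_simps) (insert b1_def, algebra)
  have dp: "dp > 0" unfolding dpe using b1 d'pos by simp
  define xP where "xP = (q^2*k^2 + 4*q*r*k^2 + 6*q*k + 4*r*k + 1)/dp"
  define yP where "yP = 2*(1-k*p)*(1+k*q)/dp"
  have Dp: "1 + 2*k*ip p q r 1 0 0 kk + k^2*ip p q r 1 0 1 0*ip p q r 0 kk 0 kk = dp/b1^2"
    unfolding ip_def kk_def dp_def using b1 by (simp add: field_simps) (insert b1_def, algebra)
  have P: "mob_add c A (kk *\<^sub>R w) = xP *\<^sub>R A + yP *\<^sub>R w"
  proof -
    have "mob_add c A (kk *\<^sub>R w) = mob_add c (1 *\<^sub>R A + 0 *\<^sub>R w) (0 *\<^sub>R A + kk *\<^sub>R w)" by simp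
    also have "\<dots> = xP *\<^sub>R A + yP *\<^sub>R w"
      unfolding mob_add_lin[OF k] p_def[symmetric] q_def[symmetric] r_def[symmetric] Dp
      apply (rule coeff_eq)
      using b1 dp unfolding ip_def xP_def yP_def kk_def
       apply (simp_all add: field_simps)
       apply (insert dp_def b1_def, algebra)+
      done
    finally show ?thesis .
  qed
  have nP: "norm (mob_add c A (kk *\<^sub>R w)) < c" by (rule add_norm(2)[OF c k nA nw'])
  have PP: "1 - k * (mob_add c A (kk *\<^sub>R w) \<bullet> mob_add c A (kk *\<^sub>R w)) = (1-k*p)*(1-k*q)^2/dp"
    unfolding P inner_lin p_def[symmetric] q_def[symmetric] r_def[symmetric] ip_def xP_def yP_def
    using dp by (simp add: field_simps) (insert dp_def, algebra)
  define a1 where "a1 = 1 - k*p"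
  have a1: "a1 > 0" using al unfolding a1_def .
  have E: "1 - k^2 * p * (mob_add c A (kk *\<^sub>R w) \<bullet> mob_add c A (kk *\<^sub>R w)) = K*b1*a1/dp"
    unfolding P inner_lin p_def[symmetric] q_def[symmetric] r_def[symmetric] ip_def xP_def yP_def
    using dp by (simp add: field_simps) (insert dp_def K_def a1_def b1_def, algebra)
  define X1 where "X1 = a1*(1-k*q)^2/dp / (K*b1*a1/dp)"
  define X2 where "X2 = a1 / (K*b1*a1/dp)"
  have X1e: "X1 = (1-k*q)^2/(K*b1)" unfolding X1_def using a1 b1 dp Kpos by (simp add: field_simps)
  have X2e: "X2 = dp/(K*b1)" unfolding X2_def using a1 b1 dp Kpos by (simp add: field_simps)
  have "mob_coadd c A (mob_add c A (kk *\<^sub>R w)) = X1 *\<^sub>R A + X2 *\<^sub>R mob_add c A (kk *\<^sub>R w)"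
    unfolding X1_def X2_def by (simp only: coadd_closed[OF c k nA nP] p_def[symmetric] PP E a1_def[symmetric])
  also have "\<dots> = (X1 + X2*xP) *\<^sub>R A + (X2*yP) *\<^sub>R w"
    unfolding P by (simp add: algebra_simps)
  also have "\<dots> = (2*xQ*dq/K) *\<^sub>R A + (2*yQ*dq/K) *\<^sub>R w"
    apply (rule coeff_eq)
    using dp dq Kpos b1 unfolding X1e X2e xP_def yP_def xQ_def yQ_def
     apply (simp_all add: field_simps)
     apply (insert b1_def, algebra)+
    done
  finally show ?thesis unfolding LHS w' ..
qed


theorem theorem1:
  fixes c :: real and A B :: "real ^ 'n" and t :: real
  assumes "c > 0"
    and "norm A < c" and "norm B < c"
    and "A \<noteq> B"
  shows "mob_smult c 2 (mob_line c A B t) = mob_coadd c A (mob_line c A B (2 * t))"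
proof -
  define k where "k = 1/c^2"
  have c: "c > 0" using assms(1) .
  have nA: "norm A < c" using assms(2) .
  have nA': "norm (-A) < c" using assms(2) by simp
  define v where "v = mob_add c (mob_neg A) B"
  have nv: "norm v < c" unfolding v_def mob_neg_def by (rule add_norm(2)[OF c k_def nA' assms(3)])
  define w where "w = mob_smult c t v"
  have nw: "norm w < c" unfolding w_def by (rule smult_double(2)[OF c k_def nv])
  have L1: "mob_line c A B t = mob_add c A w" unfolding mob_line_def w_def v_def ..
  have L2: "mob_line c A B (2*t) = mob_add c A ((2/(1+k*(w\<bullet>w))) *\<^sub>R w)"
    unfolding mob_line_def v_def[symmetric] smult_double(1)[OF c k_def nv] w_def ..
  show ?thesis unfolding L1 L2 by (rule main_id[OF c k_def nA nw])
qed

end
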